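(* Let $n\ge d$ and let $\mathcal{M}$ be a linkage $(n,d)$-matching field. Then the flip graph of $\mathcal{M}$ has exactly $\binom{n}{d+1}\cdot d$ edges.
   Context: $L=\{\ell_1,\dots,\ell_n\}$, $R=\{r_1,\dots,r_d\}$. An $(n,d)$-matching field $\mathcal{M}=(M_\sigma)$ assigns to each $d$-subset $\sigma\subseteq L$ a perfect matching $M_\sigma$ between $\sigma$ and $R$; it is linkage if for every $r_i\in R$ and every $(d+1)$-subset $\tau\subseteq L$ there exist distinct $\ell_j,\ell_{j'}\in\tau$ with $M_{\tau\setminus\{\ell_j\}}$ and $M_{\tau\setminus\{\ell_{j'}\}}$ agreeing everywhere except on the edges incident with $r_i$. The flip graph of $\mathcal{M}$ has the matchings $M_\sigma$ as nodes, two matchings being adjacent if and only if they differ in exactly one edge (i.e. agree everywhere except on the edge incident with a single right node). *)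

theory Defs
  imports Main
begin

text \<open>Left nodes: L = {0..<n} (l_j is j), right nodes: R = {0..<d} (r_i is i).
  A matching is a set of edges (l, r).\<close>

definition perfect_matching :: "nat set \<Rightarrow> nat set \<Rightarrow> (nat \<times> nat) set \<Rightarrow> bool" where
  "perfect_matching S R M \<longleftrightarrow> M \<subseteq> S \<times> R
     \<and> (\<forall>l\<in>S. \<exists>!r. (l, r) \<in> M) \<and> (\<forall>r\<in>R. \<exists>!l. (l, r) \<in> M)"

text \<open>An (n,d)-matching field: every d-subset sigma of L gets a perfect matching M sigma
  between sigma and R (values on other sets are irrelevant).\<close>
definition matching_field :: "nat \<Rightarrow> nat \<Rightarrow> (nat set \<Rightarrow> (nat \<times> nat) set) \<Rightarrow> bool" where
  "matching_field n d M \<longleftrightarrow>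
     (\<forall>\<sigma>. \<sigma> \<subseteq> {..<n} \<and> card \<sigma> = d \<longrightarrow> perfect_matching \<sigma> {..<d} (M \<sigma>))"

definition agree_except :: "nat \<Rightarrow> (nat \<times> nat) set \<Rightarrow> (nat \<times> nat) set \<Rightarrow> bool" where
  "agree_except r M1 M2 \<longleftrightarrow> {e \<in> M1. snd e \<noteq> r} = {e \<in> M2. snd e \<noteq> r}"

definition linkage :: "nat \<Rightarrow> nat \<Rightarrow> (nat set \<Rightarrow> (nat \<times> nat) set) \<Rightarrow> bool" where
  "linkage n d M \<longleftrightarrow>
     (\<forall>r\<in>{..<d}. \<forall>\<tau>. \<tau> \<subseteq> {..<n} \<and> card \<tau> = d + 1 \<longrightarrow>
        (\<exists>j\<in>\<tau>. \<exists>j'\<in>\<tau>. j \<noteq> j' \<and> agree_except r (M (\<tau> - {j})) (M (\<tau> - {j'}))))"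

text \<open>Flip graph: nodes are the matchings M sigma; two are adjacent iff they differ in
  exactly one edge, i.e. they are distinct and agree except at a single right node.\<close>
definition flip_adjacent :: "nat \<Rightarrow> (nat \<times> nat) set \<Rightarrow> (nat \<times> nat) set \<Rightarrow> bool" where
  "flip_adjacent d M1 M2 \<longleftrightarrow> M1 \<noteq> M2 \<and> (\<exists>r\<in>{..<d}. agree_except r M1 M2)"

definition flip_graph_nodes :: "nat \<Rightarrow> nat \<Rightarrow> (nat set \<Rightarrow> (nat \<times> nat) set) \<Rightarrow> (nat \<times> nat) set set" where
  "flip_graph_nodes n d M = M ` {\<sigma>. \<sigma> \<subseteq> {..<n} \<and> card \<sigma> = d}"

definition flip_graph_edges :: "nat \<Rightarrow> nat \<Rightarrow> (nat set \<Rightarrow> (nat \<times> nat) set) \<Rightarrow> (nat \<times> nat) set set set" where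
  "flip_graph_edges n d M =
     {{A, B} | A B. A \<in> flip_graph_nodes n d M \<and> B \<in> flip_graph_nodes n d M \<and> flip_adjacent d A B}"

end

theory Submission
  imports Defs
begin

lemma pm_dom: "perfect_matching S R Mt \<Longrightarrow> (l,t)\<in>Mt \<Longrightarrow> l\<in>S \<and> t\<in>R"
  by (auto simp: perfect_matching_def)

lemma pm_uniq_l: "perfect_matching S R Mt \<Longrightarrow> (l,t)\<in>Mt \<Longrightarrow> (l,t')\<in>Mt \<Longrightarrow> t=t'"
  unfolding perfect_matching_def by blast

lemma pm_uniq_r: "perfect_matching S R Mt \<Longrightarrow> (l,t)\<in>Mt \<Longrightarrow> (l',t)\<in>Mt \<Longrightarrow> l=l'"
  unfolding perfect_matching_def by blast

lemma pm_ex_l: "perfect_matching S R Mt \<Longrightarrow> l\<in>S \<Longrightarrow> \<exists>t. (l,t)\<in>Mt"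
  unfolding perfect_matching_def by blast

lemma pm_ex_r: "perfect_matching S R Mt \<Longrightarrow> t\<in>R \<Longrightarrow> \<exists>l. (l,t)\<in>Mt"
  unfolding perfect_matching_def by blast

lemma pm_fst: "perfect_matching S R Mt \<Longrightarrow> fst ` Mt = S"
  unfolding perfect_matching_def by force

lemma agree_sym: "agree_except r A B \<Longrightarrow> agree_except r B A"
  by (simp add: agree_except_def)

definition gS :: "nat set \<Rightarrow> (nat \<Rightarrow> (nat\<times>nat) set) \<Rightarrow> nat \<Rightarrow> (nat\<times>nat) set" where
  "gS S N x = {e\<in>N x. snd e \<notin> S}"

definition Er :: "nat set \<Rightarrow> (nat \<Rightarrow> (nat\<times>nat) set) \<Rightarrow> nat \<Rightarrow> (nat\<times>nat) set" where
  "Er \<tau> N r = {(a,b). a\<in>\<tau> \<and> b\<in>\<tau> \<and> a<b \<and> agree_except r (N a) (N b)}"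

lemma edge_partner:
  assumes pm: "\<And>x. x\<in>\<tau> \<Longrightarrow> perfect_matching (\<tau>-{x}) R (N x)"
    and "a\<in>\<tau>" "b\<in>\<tau>" "a\<noteq>b" "agree_except r (N a) (N b)"
  shows "(b,r)\<in>N a"
proof -
  obtain t where t: "(b,t)\<in>N a" using pm_ex_l[OF pm[OF assms(2)], of b] assms by auto
  show ?thesis
  proof (cases "t = r")
    case True then show ?thesis using t by simp
  next
    case False
    then have "(b,t) \<in> {e\<in>N a. snd e \<noteq> r}" using t by auto
    then have "(b,t) \<in> N b" using assms(5) unfolding agree_except_def by auto
    then show ?thesis using pm_dom[OF pm[OF assms(3)]] by auto
  qed
qed

lemma class_uniq:
  assumes pm: "\<And>x. x\<in>\<tau> \<Longrightarrow> perfect_matching (\<tau>-{x}) R (N x)"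
    and r: "r \<notin> S"
    and x: "x\<in>\<tau>" "y\<in>\<tau>" "(y,r)\<in>N x" "(x,r)\<in>N y"
    and x': "x'\<in>\<tau>" "y'\<in>\<tau>" "(y',r)\<in>N x'" "(x',r)\<in>N y'"
    and eq: "gS S N x = gS S N x'"
  shows "x = x'"
proof -
  have "(y,r) \<in> gS S N x" using x r by (simp add: gS_def)
  then have "(y,r) \<in> N x'" using eq unfolding gS_def by blast
  then have "y = y'" using pm_uniq_r[OF pm[OF x'(1)]] x'(3) by blast
  then show ?thesis using pm_uniq_r[OF pm[OF x(2)]] x(4) x'(4) by blast
qed

lemma count_generic:
  assumes "finite A" "D \<subseteq> A" "\<forall>y\<in>D. \<exists>z\<in>A-D. h z = h y"
  shows "card (h ` A) + card D \<le> card A"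
proof -
  have "h ` A = h ` (A - D)" using assms(3) by (auto simp: image_iff) (metis Diff_iff)
  then have "card (h ` A) \<le> card (A - D)" by (simp add: card_image_le assms(1))
  also have "\<dots> = card A - card D" using assms by (simp add: card_Diff_subset finite_subset)
  finally show ?thesis using card_mono[OF assms(1,2)] by linarith
qed

lemma step_count:
  assumes pm: "\<And>x. x\<in>\<tau> \<Longrightarrow> perfect_matching (\<tau>-{x}) R (N x)"
    and fin: "finite \<tau>" and r: "r \<notin> S"
  shows "card (gS (insert r S) N ` \<tau>) + card (Er \<tau> N r) \<le> card (gS S N ` \<tau>)"
proof -
  define A where "A = gS S N ` \<tau>"
  define h where "h = (\<lambda>X::(nat\<times>nat) set. {e\<in>X. snd e \<noteq> r})"
  have img: "gS (insert r S) N ` \<tau> = h ` A"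
    unfolding A_def h_def image_image gS_def by auto
  define f where "f = (\<lambda>p::nat\<times>nat. gS S N (fst p))"
  define D where "D = f ` Er \<tau> N r"
  have edge: "(b,r)\<in>N a \<and> (a,r)\<in>N b \<and> a\<in>\<tau> \<and> b\<in>\<tau> \<and> a<b" if "(a,b)\<in>Er \<tau> N r" for a b
    using that edge_partner[OF pm, of a b r] edge_partner[OF pm, of b a r] agree_sym
    unfolding Er_def by auto
  have inj: "inj_on f (Er \<tau> N r)"
  proof (rule inj_onI)
    fix p q assume p: "p \<in> Er \<tau> N r" and q: "q \<in> Er \<tau> N r" and fe: "f p = f q"
    obtain a b where ab: "p = (a,b)" by (cases p)
    obtain a' b' where ab': "q = (a',b')" by (cases q)
    have e1: "(b,r)\<in>N a \<and> (a,r)\<in>N b \<and> a\<in>\<tau> \<and> b\<in>\<tau>" using edge p ab by blast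
    have e2: "(b',r)\<in>N a' \<and> (a',r)\<in>N b' \<and> a'\<in>\<tau> \<and> b'\<in>\<tau>" using edge q ab' by blast
    have "a = a'" using class_uniq[OF pm r, of a b a' b'] e1 e2 fe ab ab' f_def by auto
    moreover then have "b = b'" using pm_uniq_r[OF pm, of a b r b'] e1 e2 by auto
    ultimately show "p = q" using ab ab' by simp
  qed
  have DA: "D \<subseteq> A" unfolding D_def A_def f_def Er_def by auto
  have partner: "\<forall>y\<in>D. \<exists>z\<in>A-D. h z = h y"
  proof
    fix y assume "y \<in> D"
    then obtain a b where ab: "(a,b) \<in> Er \<tau> N r" and y: "y = gS S N a"
      unfolding D_def f_def by auto
    have e1: "(b,r)\<in>N a \<and> (a,r)\<in>N b \<and> a\<in>\<tau> \<and> b\<in>\<tau> \<and> a<b" using edge ab by blast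
    have ag: "agree_except r (N a) (N b)" using ab unfolding Er_def by auto
    have "h (gS S N b) = h y" using ag unfolding y h_def gS_def agree_except_def by blast
    moreover have "gS S N b \<notin> D"
    proof
      assume "gS S N b \<in> D"
      then obtain a' b' where ab': "(a',b') \<in> Er \<tau> N r" and y': "gS S N b = gS S N a'"
        unfolding D_def f_def by auto
      have e2: "(b',r)\<in>N a' \<and> (a',r)\<in>N b' \<and> a'\<in>\<tau> \<and> b'\<in>\<tau> \<and> a'<b'" using edge ab' by blast
      have "b = a'" using class_uniq[OF pm r, of b a a' b'] e1 e2 y' by auto
      then have "a = b'" using pm_uniq_r[OF pm, of b a r b'] e1 e2 by auto
      then show False using e1 e2 \<open>b = a'\<close> by simp
    qed
    moreover have "gS S N b \<in> A" using e1 unfolding A_def by auto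
    ultimately show "\<exists>z\<in>A-D. h z = h y" by blast
  qed
  have "card (h ` A) + card D \<le> card A"
    by (rule count_generic[OF _ DA partner]) (simp add: A_def fin)
  moreover have "card D = card (Er \<tau> N r)" unfolding D_def by (rule card_image[OF inj])
  ultimately show ?thesis using img A_def by simp
qed

lemma sum_count:
  assumes pm: "\<And>x. x\<in>\<tau> \<Longrightarrow> perfect_matching (\<tau>-{x}) R (N x)"
    and fin: "finite \<tau>" and finS: "finite S"
  shows "card (gS S N ` \<tau>) + (\<Sum>r\<in>S. card (Er \<tau> N r)) \<le> card \<tau>"
  using finS
proof (induction S rule: finite_induct)
  case empty
  then show ?case using card_image_le[OF fin] by simp
next
  case (insert r S)
  have "card (gS (insert r S) N ` \<tau>) + card (Er \<tau> N r) \<le> card (gS S N ` \<tau>)"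
    by (rule step_count[OF pm fin insert(2)])
  then show ?case using insert by simp
qed


lemma uniq_pair:
  assumes pm: "\<And>x. x\<in>\<tau> \<Longrightarrow> perfect_matching (\<tau>-{x}) R (N x)"
    and fin: "finite \<tau>" and ct: "card \<tau> = d+1"
    and ne: "\<And>r. r<d \<Longrightarrow> Er \<tau> N r \<noteq> {}"
    and r: "r<d" and p: "p \<in> Er \<tau> N r" and q: "q \<in> Er \<tau> N r"
  shows "p = q"
proof (rule ccontr)
  assume pq: "p \<noteq> q"
  have fE: "finite (Er \<tau> N r')" for r'
    by (rule finite_subset[of _ "\<tau>\<times>\<tau>"]) (auto simp: Er_def fin)
  have s: "card (gS {..<d} N ` \<tau>) + (\<Sum>r\<in>{..<d}. card (Er \<tau> N r)) \<le> d+1"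
    using sum_count[OF pm fin, of "{..<d}"] ct by simp
  have "\<tau> \<noteq> {}" using ct by auto
  then have "card (gS {..<d} N ` \<tau>) \<ge> 1" using fin
    by (simp add: Suc_leI card_gt_0_iff)
  with s have s2: "(\<Sum>r\<in>{..<d}. card (Er \<tau> N r)) \<le> d" by linarith
  have "card {p,q} \<le> card (Er \<tau> N r)" using p q fE by (intro card_mono) auto
  then have c2: "2 \<le> card (Er \<tau> N r)" using pq by simp
  have "(\<Sum>r'\<in>{..<d}-{r}. 1) \<le> (\<Sum>r'\<in>{..<d}-{r}. card (Er \<tau> N r'))"
  proof (rule sum_mono)
    fix r' assume "r' \<in> {..<d}-{r}"
    then have "Er \<tau> N r' \<noteq> {}" using ne by auto
    then show "1 \<le> card (Er \<tau> N r')" using fE by (simp add: Suc_leI card_gt_0_iff)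
  qed
  moreover have "(\<Sum>r'\<in>{..<d}-{r}. (1::nat)) = d - 1" using r by simp
  moreover have "(\<Sum>r\<in>{..<d}. card (Er \<tau> N r)) = card (Er \<tau> N r) + (\<Sum>r'\<in>{..<d}-{r}. card (Er \<tau> N r'))"
    using r by (simp add: sum.remove)
  ultimately show False using s2 c2 r by linarith
qed


lemma agree_mem: "agree_except r A B \<Longrightarrow> e\<in>A \<Longrightarrow> snd e \<noteq> r \<Longrightarrow> e\<in>B"
  unfolding agree_except_def by (metis (mono_tags, lifting) mem_Collect_eq)

lemma adj_half:
  assumes pA: "perfect_matching \<sigma> R A" and pB: "perfect_matching \<sigma>' R B"
    and ag: "agree_except r A B" and a: "(a,r)\<in>A" and b: "(b,r)\<in>B" and ab: "a \<noteq> b"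
  shows "b \<notin> \<sigma> \<and> (\<forall>x\<in>\<sigma>. x \<noteq> a \<longrightarrow> x \<in> \<sigma>') \<and> a \<in> \<sigma> \<and> (a,r) \<notin> B"
proof -
  have bs: "b \<notin> \<sigma>"
  proof
    assume "b \<in> \<sigma>"
    then obtain t where t: "(b,t)\<in>A" using pm_ex_l[OF pA] by metis
    show False
    proof (cases "t = r")
      case True then show False using pm_uniq_r[OF pA a, of b] t ab by simp
    next
      case False
      then have "(b,t)\<in>B" using agree_mem[OF ag t] by simp
      then show False using pm_uniq_l[OF pB b, of t] False by simp
    qed
  qed
  have "\<forall>x\<in>\<sigma>. x \<noteq> a \<longrightarrow> x \<in> \<sigma>'"
  proof (intro ballI impI)
    fix x assume x: "x\<in>\<sigma>" "x \<noteq> a"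
    then obtain t where t: "(x,t)\<in>A" using pm_ex_l[OF pA] by metis
    have "t \<noteq> r" using pm_uniq_r[OF pA a, of x] t x by auto
    then have "(x,t)\<in>B" using agree_mem[OF ag t] by simp
    then show "x\<in>\<sigma>'" using pm_dom[OF pB] by simp
  qed
  moreover have "(a,r)\<notin>B" using pm_uniq_r[OF pB b, of a] ab by auto
  moreover have "a \<in> \<sigma>" using pm_dom[OF pA a] by simp
  ultimately show ?thesis using bs by simp
qed

lemma adj_struct:
  assumes pA: "perfect_matching \<sigma> R A" and pB: "perfect_matching \<sigma>' R B"
    and fin: "finite \<sigma>" and c: "card \<sigma> = d"
    and AB: "A \<noteq> B" and r: "r\<in>R" and ag: "agree_except r A B"
  shows "card (\<sigma>\<union>\<sigma>') = d+1 \<and> fst`(A\<union>B) = \<sigma>\<union>\<sigma>' \<and> snd`((A\<union>B) - (A\<inter>B)) = {r}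
     \<and> (\<exists>a b. a\<in>\<sigma>\<union>\<sigma>' \<and> b\<in>\<sigma>\<union>\<sigma>' \<and> a\<noteq>b \<and> \<sigma> = (\<sigma>\<union>\<sigma>')-{a} \<and> \<sigma>' = (\<sigma>\<union>\<sigma>')-{b})"
proof -
  obtain a where a: "(a,r)\<in>A" using pm_ex_r[OF pA r] by metis
  obtain b where b: "(b,r)\<in>B" using pm_ex_r[OF pB r] by metis
  have ab: "a \<noteq> b"
  proof
    assume eq: "a = b"
    have "A \<subseteq> B"
    proof
      fix e assume e: "e \<in> A"
      show "e \<in> B"
      proof (cases "snd e = r")
        case True
        then have "fst e = a" using pm_uniq_r[OF pA a, of "fst e"] e by (cases e) auto
        then show ?thesis using True eq b by (cases e) auto
      next
        case False then show ?thesis using agree_mem[OF ag e] by simp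
      qed
    qed
    moreover have "B \<subseteq> A"
    proof
      fix e assume e: "e \<in> B"
      show "e \<in> A"
      proof (cases "snd e = r")
        case True
        then have "fst e = b" using pm_uniq_r[OF pB b, of "fst e"] e by (cases e) auto
        then show ?thesis using True eq a by (cases e) auto
      next
        case False then show ?thesis using agree_mem[OF agree_sym[OF ag] e] by simp
      qed
    qed
    ultimately show False using AB by simp
  qed
  have h1: "b \<notin> \<sigma> \<and> (\<forall>x\<in>\<sigma>. x \<noteq> a \<longrightarrow> x \<in> \<sigma>') \<and> a \<in> \<sigma> \<and> (a,r) \<notin> B"
    by (rule adj_half[OF pA pB ag a b ab])
  have ba: "b \<noteq> a" using ab by simp
  have h2: "a \<notin> \<sigma>' \<and> (\<forall>x\<in>\<sigma>'. x \<noteq> b \<longrightarrow> x \<in> \<sigma>) \<and> b \<in> \<sigma>' \<and> (b,r) \<notin> A"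
    by (rule adj_half[OF pB pA agree_sym[OF ag] b a ba])
  have U: "\<sigma>\<union>\<sigma>' = insert b \<sigma>" using h1 h2 by blast
  have card: "card (\<sigma>\<union>\<sigma>') = d+1" using U h1 fin c by simp
  have s1: "\<sigma> = (\<sigma>\<union>\<sigma>')-{b}" using U h1 by blast
  have s2: "\<sigma>' = (\<sigma>\<union>\<sigma>')-{a}" using h1 h2 by blast
  have fstU: "fst`(A\<union>B) = \<sigma>\<union>\<sigma>'" using pm_fst[OF pA] pm_fst[OF pB] by (simp add: image_Un)
  have "(A\<union>B) - (A\<inter>B) \<subseteq> {(a,r),(b,r)}"
  proof
    fix e assume e: "e \<in> (A\<union>B) - (A\<inter>B)"
    obtain l t where lt: "e = (l,t)" by (cases e)
    show "e \<in> {(a,r),(b,r)}"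
    proof (cases "t = r")
      case True
      show ?thesis
      proof (cases "e \<in> A")
        case True
        then show ?thesis using pm_uniq_r[OF pA a, of l] lt \<open>t = r\<close> by simp
      next
        case False
        then have "e \<in> B" using e by simp
        then show ?thesis using pm_uniq_r[OF pB b, of l] lt \<open>t = r\<close> by simp
      qed
    next
      case False
      then show ?thesis using e agree_mem[OF ag, of e] agree_mem[OF agree_sym[OF ag], of e] lt by auto
    qed
  qed
  moreover have "(a,r) \<in> (A\<union>B) - (A\<inter>B)" "(b,r) \<in> (A\<union>B) - (A\<inter>B)" using a b h1 h2 by auto
  ultimately have "(A\<union>B) - (A\<inter>B) = {(a,r),(b,r)}" by blast
  then have "snd`((A\<union>B) - (A\<inter>B)) = {r}" by simp
  moreover have "a \<in> \<sigma>\<union>\<sigma>'" "b \<in> \<sigma>\<union>\<sigma>'" using h1 h2 by auto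
  ultimately show ?thesis using card fstU s1 s2 ab by blast
qed


lemma order_pair:
  assumes "a\<in>\<tau>" "b\<in>\<tau>" "a\<noteq>b" "agree_except r (N a) (N b)"
  shows "\<exists>p\<in>Er \<tau> N r. {N (fst p), N (snd p)} = {N a, N b}"
proof (cases "a < b")
  case True
  then show ?thesis using assms by (intro bexI[of _ "(a,b)"]) (auto simp: Er_def)
next
  case False
  then have "b < a" using assms(3) by simp
  then show ?thesis using assms agree_sym[OF assms(4)] by (intro bexI[of _ "(b,a)"]) (auto simp: Er_def)
qed

lemma F_pair: "(\<lambda>e::(nat\<times>nat) set set. (fst ` \<Union>e, snd ` (\<Union>e - \<Inter>e))) {A,B}
   = (fst ` (A\<union>B), snd ` ((A\<union>B) - (A\<inter>B)))"
  by simp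

theorem lemma3p38:
  fixes n d :: nat and M :: "nat set \<Rightarrow> (nat \<times> nat) set"
  assumes "d \<le> n"
    and "matching_field n d M"
    and "linkage n d M"
  shows "card (flip_graph_edges n d M) = (n choose (d + 1)) * d"
proof -
  define Sub where "Sub = {\<tau>. \<tau> \<subseteq> {..<n} \<and> card \<tau> = d+1}"
  define T where "T = (\<lambda>(\<tau>,r). (\<tau>,{r::nat})) ` (Sub \<times> {..<d})"
  define F where "F = (\<lambda>e::(nat\<times>nat) set set. (fst ` \<Union>e, snd ` (\<Union>e - \<Inter>e)))"
  define E where "E = flip_graph_edges n d M"
  have pmS: "perfect_matching \<sigma> {..<d} (M \<sigma>)" if "\<sigma> \<subseteq> {..<n}" "card \<sigma> = d" for \<sigma>
    using assms(2) that unfolding matching_field_def by blast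
  have finS: "finite \<sigma>" if "\<sigma> \<subseteq> {..<n}" for \<sigma> using that finite_subset by blast
  have ecases: "\<exists>\<sigma> \<sigma>' r. e = {M \<sigma>, M \<sigma>'} \<and> \<sigma>\<subseteq>{..<n} \<and> card \<sigma> = d \<and> \<sigma>'\<subseteq>{..<n} \<and> card \<sigma>' = d
       \<and> M \<sigma> \<noteq> M \<sigma>' \<and> r<d \<and> agree_except r (M \<sigma>) (M \<sigma>')" if "e \<in> E" for e
    using that unfolding E_def flip_graph_edges_def flip_graph_nodes_def flip_adjacent_def by blast
  have adj: "card (\<sigma>\<union>\<sigma>') = d+1 \<and> F {M \<sigma>, M \<sigma>'} = (\<sigma>\<union>\<sigma>', {r})
     \<and> (\<exists>a b. a\<in>\<sigma>\<union>\<sigma>' \<and> b\<in>\<sigma>\<union>\<sigma>' \<and> a\<noteq>b \<and> \<sigma> = (\<sigma>\<union>\<sigma>')-{a} \<and> \<sigma>' = (\<sigma>\<union>\<sigma>')-{b})"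
    if "\<sigma>\<subseteq>{..<n}" "card \<sigma> = d" "\<sigma>'\<subseteq>{..<n}" "card \<sigma>' = d" "M \<sigma> \<noteq> M \<sigma>'" "r<d"
       "agree_except r (M \<sigma>) (M \<sigma>')" for \<sigma> \<sigma>' r
  proof -
    have "card (\<sigma>\<union>\<sigma>') = d+1 \<and> fst`(M \<sigma>\<union>M \<sigma>') = \<sigma>\<union>\<sigma>' \<and> snd`((M \<sigma>\<union>M \<sigma>') - (M \<sigma>\<inter>M \<sigma>')) = {r}
     \<and> (\<exists>a b. a\<in>\<sigma>\<union>\<sigma>' \<and> b\<in>\<sigma>\<union>\<sigma>' \<and> a\<noteq>b \<and> \<sigma> = (\<sigma>\<union>\<sigma>')-{a} \<and> \<sigma>' = (\<sigma>\<union>\<sigma>')-{b})"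
      by (rule adj_struct[OF pmS[OF that(1,2)] pmS[OF that(3,4)] finS[OF that(1)] that(2) that(5)])
         (use that in auto)
    then show ?thesis unfolding F_def by simp
  qed
  have N_pm: "perfect_matching (\<tau>-{x}) {..<d} (M (\<tau>-{x}))" if "\<tau> \<in> Sub" "x \<in> \<tau>" for \<tau> x
  proof -
    have "finite \<tau>" using that finS unfolding Sub_def by blast
    then have "card (\<tau>-{x}) = d" using that unfolding Sub_def by simp
    moreover have "\<tau>-{x} \<subseteq> {..<n}" using that unfolding Sub_def by blast
    ultimately show ?thesis using pmS by blast
  qed
  have ne: "Er \<tau> (\<lambda>x. M (\<tau>-{x})) r \<noteq> {}" if tS0: "\<tau> \<in> Sub" "r < d" for \<tau> r
  proof -
    obtain j j' where jj: "j\<in>\<tau>" "j'\<in>\<tau>" "j\<noteq>j'" "agree_except r (M (\<tau>-{j})) (M (\<tau>-{j'}))"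
      using assms(3)[unfolded linkage_def, rule_format, of r \<tau>] tS0 unfolding Sub_def by auto
    show ?thesis using order_pair[of j \<tau> j' r "\<lambda>x. M (\<tau>-{x})"] jj by blast
  qed
  have C1: "F ` E \<subseteq> T"
  proof
    fix y assume "y \<in> F ` E"
    then obtain e where e: "e \<in> E" "y = F e" by blast
    obtain \<sigma> \<sigma>' r where H: "e = {M \<sigma>, M \<sigma>'}" "\<sigma>\<subseteq>{..<n}" "card \<sigma> = d" "\<sigma>'\<subseteq>{..<n}" "card \<sigma>' = d"
       "M \<sigma> \<noteq> M \<sigma>'" "r<d" "agree_except r (M \<sigma>) (M \<sigma>')" using ecases[OF e(1)] by blast
    have A: "card (\<sigma>\<union>\<sigma>') = d+1 \<and> F e = (\<sigma>\<union>\<sigma>', {r})" using adj[OF H(2-8)] H(1) by simp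
    have "\<sigma>\<union>\<sigma>' \<in> Sub" using A H unfolding Sub_def by auto
    then show "y \<in> T" using A e H(7) unfolding T_def by force
  qed
  have C2: "T \<subseteq> F ` E"
  proof
    fix y assume "y \<in> T"
    then obtain \<tau> r where y: "y = (\<tau>,{r})" "\<tau> \<in> Sub" "r < d" unfolding T_def by auto
    obtain j j' where jj: "j\<in>\<tau>" "j'\<in>\<tau>" "j\<noteq>j'" "agree_except r (M (\<tau>-{j})) (M (\<tau>-{j'}))"
      using assms(3)[unfolded linkage_def, rule_format, of r \<tau>] y unfolding Sub_def by auto
    have p1: "perfect_matching (\<tau>-{j}) {..<d} (M (\<tau>-{j}))" using N_pm y jj by blast
    have p2: "perfect_matching (\<tau>-{j'}) {..<d} (M (\<tau>-{j'}))" using N_pm y jj by blast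
    have "\<tau>-{j} \<noteq> \<tau>-{j'}" using jj by blast
    then have neq: "M (\<tau>-{j}) \<noteq> M (\<tau>-{j'})" using pm_fst[OF p1] pm_fst[OF p2] by metis
    have fin: "finite \<tau>" using y finS unfolding Sub_def by blast
    have s1: "\<tau>-{j} \<subseteq> {..<n}" "card (\<tau>-{j}) = d" "\<tau>-{j'} \<subseteq> {..<n}" "card (\<tau>-{j'}) = d"
      using y jj fin unfolding Sub_def by auto
    have eE: "{M (\<tau>-{j}), M (\<tau>-{j'})} \<in> E"
      unfolding E_def flip_graph_edges_def flip_graph_nodes_def flip_adjacent_def
      using s1 neq jj y by blast
    have U: "(\<tau>-{j}) \<union> (\<tau>-{j'}) = \<tau>" using jj by blast
    have "F {M (\<tau>-{j}), M (\<tau>-{j'})} = (\<tau>, {r})" using adj[OF s1 neq y(3) jj(4)] U by simp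
    then show "y \<in> F ` E" using eE y by force
  qed
  have C3: "inj_on F E"
  proof (rule inj_onI)
    fix e1 e2 assume e1: "e1 \<in> E" and e2: "e2 \<in> E" and Feq: "F e1 = F e2"
    obtain \<sigma>1 \<sigma>1' r1 where H1: "e1 = {M \<sigma>1, M \<sigma>1'}" "\<sigma>1\<subseteq>{..<n}" "card \<sigma>1 = d" "\<sigma>1'\<subseteq>{..<n}" "card \<sigma>1' = d"
       "M \<sigma>1 \<noteq> M \<sigma>1'" "r1<d" "agree_except r1 (M \<sigma>1) (M \<sigma>1')" using ecases[OF e1] by blast
    obtain \<sigma>2 \<sigma>2' r2 where H2: "e2 = {M \<sigma>2, M \<sigma>2'}" "\<sigma>2\<subseteq>{..<n}" "card \<sigma>2 = d" "\<sigma>2'\<subseteq>{..<n}" "card \<sigma>2' = d"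
       "M \<sigma>2 \<noteq> M \<sigma>2'" "r2<d" "agree_except r2 (M \<sigma>2) (M \<sigma>2')" using ecases[OF e2] by blast
    note A1 = adj[OF H1(2-8)] and A2 = adj[OF H2(2-8)]
    define \<tau> where "\<tau> = \<sigma>1\<union>\<sigma>1'"
    have tt: "\<sigma>2\<union>\<sigma>2' = \<tau>" and rr: "r2 = r1" using A1 A2 Feq H1(1) H2(1) \<tau>_def by auto
    have tS: "\<tau> \<in> Sub" using A1 H1 unfolding Sub_def \<tau>_def by auto
    have fin: "finite \<tau>" using tS finS unfolding Sub_def by blast
    obtain a1 b1 where ab1: "a1\<in>\<tau>" "b1\<in>\<tau>" "a1\<noteq>b1" "\<sigma>1 = \<tau>-{a1}" "\<sigma>1' = \<tau>-{b1}"
      using A1 unfolding \<tau>_def by blast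
    obtain a2 b2 where ab2: "a2\<in>\<tau>" "b2\<in>\<tau>" "a2\<noteq>b2" "\<sigma>2 = \<tau>-{a2}" "\<sigma>2' = \<tau>-{b2}"
      using A2 tt by blast
    define N where "N = (\<lambda>x. M (\<tau>-{x}))"
    have pm: "\<And>x. x\<in>\<tau> \<Longrightarrow> perfect_matching (\<tau>-{x}) {..<d} (N x)" using N_pm[OF tS] N_def by simp
    have ct: "card \<tau> = d+1" using tS unfolding Sub_def by simp
    have neN: "\<And>r. r<d \<Longrightarrow> Er \<tau> N r \<noteq> {}" using ne[OF tS] N_def by simp
    obtain p where p: "p \<in> Er \<tau> N r1" "{N (fst p), N (snd p)} = {N a1, N b1}"
      using order_pair[of a1 \<tau> b1 r1 N] ab1 H1(8) N_def by auto
    obtain q where q: "q \<in> Er \<tau> N r1" "{N (fst q), N (snd q)} = {N a2, N b2}"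
      using order_pair[of a2 \<tau> b2 r1 N] ab2 H2(8) N_def rr by auto
    have "p = q" by (rule uniq_pair[OF pm fin ct neN H1(7) p(1) q(1)])
    then show "e1 = e2" using p(2) q(2) H1(1) H2(1) ab1 ab2 N_def by simp
  qed
  have "card E = card (F ` E)" using card_image[OF C3] by simp
  also have "F ` E = T" using C1 C2 by blast
  also have "card T = card (Sub \<times> {..<d})"
    unfolding T_def by (rule card_image) (auto simp: inj_on_def)
  also have "\<dots> = (n choose (d+1)) * d"
    using n_subsets[of "{..<n}" "d+1"] unfolding Sub_def by (simp add: card_cartesian_product)
  finally show ?thesis unfolding E_def .
qed

end
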